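(* Let $M>2$, $p_M=\frac{M+2}{M-2}$, $m\ge1$, and for $p\in(1,p_M)$ let $v_p$ be the unique solution in $H^1_{0,M}$ of $-(t^{M-1}v')'=t^{M-1}|v|^{p-1}v$ on $(0,1)$, $v'(0)=0$, $v(1)=0$, with exactly $m$ nodal zones and $v_p(0)>0$. For all $i=0,\dots,m-1$, \[ \liminf_{p\to p_M}\int_{t_{i,p}}^{t_{i+1,p}}t^{M-1}|v_p|^{p+1}dt=\liminf_{p\to p_M}\int_{t_{i,p}}^{t_{i+1,p}}t^{M-1}|v_p'|^{2}dt\ge S_M^{M/2}, \] and in particular $\liminf_{p\to p_M}\mathcal M_{i,p}>0$.
   Context: $H^1_{0,M}$: measurable $v$ on $(0,1)$ with $\int_0^1t^{M-1}(v^2+|v'|^2)<\infty$ and $v(1)=0$. $0=t_{0,p}<t_{1,p}<\dots<t_{m,p}=1$ are $0$ and the zeros of $v_p$; $\mathcal M_{i,p}=\max_{[t_{i,p},t_{i+1,p}]}|v_p|$. $S_M=\inf\{\int_0^1t^{M-1}|v'|^2dt/(\int_0^1t^{M-1}|v|^{2M/(M-2)}dt)^{(M-2)/M}: v\in H^1_{0,M}\setminus\{0\}\}$ is the best constant of the Sobolev embedding of $H^1_{0,M}$ into the weighted space $L^{2M/(M-2)}$ with weight $t^{M-1}$. *)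

theory Defs
  imports "HOL-Analysis.Analysis"
begin

text \<open>The space H^1_{0,M}: v on (0,1] given (as its absolutely continuous representative)
  by v x = - integral of its weak derivative g over [x,1] (this encodes v(1) = 0),
  with the weighted norm integral of t^(M-1)(v^2 + g^2) over (0,1) finite.\<close>
definition H10M :: "real \<Rightarrow> (real \<Rightarrow> real) \<Rightarrow> (real \<Rightarrow> real) \<Rightarrow> bool" where
  "H10M M v g \<longleftrightarrow>
     (\<forall>a\<in>{0<..<1}. g integrable_on {a..1}) \<and>
     (\<forall>x\<in>{0<..1}. v x = - integral {x..1} g) \<and>
     set_integrable lborel {0<..<1::real} (\<lambda>t. t powr (M-1) * (v t)\<^sup>2) \<and>
     set_integrable lborel {0<..<1::real} (\<lambda>t. t powr (M-1) * (g t)\<^sup>2)"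

definition S_M :: "real \<Rightarrow> real" where
  "S_M M = (INF vg \<in> {(v, g). H10M M v g \<and> (\<exists>t\<in>{0<..1}. v t \<noteq> 0) \<and>
        set_integrable lborel {0<..<1::real} (\<lambda>t. t powr (M-1) * \<bar>v t\<bar> powr (2*M/(M-2)))}.
      (LINT t:{0<..<1}|lborel. t powr (M-1) * (snd vg t)\<^sup>2) /
      (LINT t:{0<..<1}|lborel. t powr (M-1) * \<bar>fst vg t\<bar> powr (2*M/(M-2))) powr ((M-2)/M))"

text \<open>v is a (classical) solution of -(t^(M-1) v')' = t^(M-1) |v|^(p-1) v on (0,1),
  v'(0) = 0, v(1) = 0, with derivative v', exactly m nodal zones (m-1 zeros in (0,1)),
  and v(0) > 0.\<close>
definition radial_sol :: "real \<Rightarrow> real \<Rightarrow> nat \<Rightarrow> (real \<Rightarrow> real) \<Rightarrow> (real \<Rightarrow> real) \<Rightarrow> bool" where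
  "radial_sol M p m v v' \<longleftrightarrow>
     (\<forall>t\<in>{0..1}. (v has_real_derivative v' t) (at t within {0..1})) \<and>
     continuous_on {0..1} v' \<and> v' 0 = 0 \<and> v 1 = 0 \<and>
     (\<forall>t\<in>{0<..<1}. ((\<lambda>s. s powr (M-1) * v' s) has_real_derivative
         - (t powr (M-1) * (\<bar>v t\<bar> powr (p-1) * v t))) (at t)) \<and>
     finite {t\<in>{0<..<1}. v t = 0} \<and> card {t\<in>{0<..<1}. v t = 0} = m - 1 \<and>
     v 0 > 0"

text \<open>The points 0 = t_0 < t_1 < ... < t_m = 1: 0 and the zeros of v in (0,1].\<close>
definition nodes :: "(real \<Rightarrow> real) \<Rightarrow> nat \<Rightarrow> real" where
  "nodes v i = sorted_list_of_set ({0} \<union> {t\<in>{0<..1}. v t = 0}) ! i"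

end

theory Submission
  imports Defs
begin

context
  fixes M p a b :: real and v dv :: "real \<Rightarrow> real"
  assumes M2: "M > 2" and p1: "1 < p" and pM: "p < (M+2)/(M-2)"
    and a0: "0 \<le> a" and ab: "a < b" and b1: "b \<le> 1"
    and D: "\<forall>t\<in>{0..1}. (v has_real_derivative dv t) (at t within {0..1})"
    and cdv: "continuous_on {0..1} dv"
    and ode: "\<forall>t\<in>{0<..<1}. ((\<lambda>s. s powr (M-1) * dv s) has_real_derivative
         - (t powr (M-1) * (\<bar>v t\<bar> powr (p-1) * v t))) (at t)"
    and za: "a = 0 \<or> v a = 0" and zb: "v b = 0"
    and nz: "\<forall>t\<in>{a<..<b}. v t \<noteq> 0"
begin

lemma sub01: "{a..b} \<subseteq> {0..1}" using a0 b1 by auto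

lemma cv01: "continuous_on {0..1} v"
  by (rule DERIV_continuous_on) (use D in auto)

lemma cv: "continuous_on {a..b} v" using cv01 continuous_on_subset sub01 by blast
lemma cdvab: "continuous_on {a..b} dv" using cdv continuous_on_subset sub01 by blast

lemma cw: "continuous_on {a..b} (\<lambda>t. t powr (M-1))"
  by (rule continuous_on_powr') (use M2 a0 in \<open>auto intro!: continuous_intros\<close>)

lemma cpow: "e > 0 \<Longrightarrow> continuous_on {a..b} (\<lambda>t. \<bar>v t\<bar> powr e)"
  by (rule continuous_on_powr') (use cv in \<open>auto intro!: continuous_intros\<close>)

lemma Dat: "t \<in> {0<..<1} \<Longrightarrow> (v has_real_derivative dv t) (at t)"
proof -
  assume t: "t \<in> {0<..<1}"
  then have "at t within {0..1} = at t" by (intro at_within_interior) auto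
  moreover have "(v has_real_derivative dv t) (at t within {0..1})" using D t by auto
  ultimately show ?thesis by simp
qed

lemma energy:
  "integral {a..b} (\<lambda>t. t powr (M-1) * \<bar>v t\<bar> powr (p+1)) =
   integral {a..b} (\<lambda>t. t powr (M-1) * (dv t)\<^sup>2)"
proof -
  define G where "G t = t powr (M-1) * dv t * v t" for t
  have cG: "continuous_on {a..b} G" unfolding G_def
    using continuous_on_mult[OF continuous_on_mult[OF cw cdvab] cv] by simp
  have dG: "(G has_vector_derivative (t powr (M-1) * (dv t)\<^sup>2 - t powr (M-1) * \<bar>v t\<bar> powr (p+1))) (at t)"
    if t: "t \<in> {a<..<b}" for t
  proof -
    have t01: "t \<in> {0<..<1}" using t a0 b1 by auto
    have "(G has_real_derivative (- (t powr (M-1) * (\<bar>v t\<bar> powr (p-1) * v t))) * v t + (t powr (M-1) * dv t) * dv t) (at t)"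
      unfolding G_def using DERIV_mult[OF ode[rule_format, OF t01] Dat[OF t01]]
      by (rule DERIV_cong) (simp add: algebra_simps)
    moreover have "\<bar>v t\<bar> powr (p-1) * v t * v t = \<bar>v t\<bar> powr (p+1)"
    proof (cases "v t = 0")
      case False
      have "\<bar>v t\<bar> powr (p+1) = \<bar>v t\<bar> powr ((p-1) + 2)" by (simp add: add.commute)
      also have "\<dots> = \<bar>v t\<bar> powr (p-1) * \<bar>v t\<bar> powr 2" by (rule powr_add)
      also have "\<bar>v t\<bar> powr 2 = (v t)\<^sup>2" by (simp add: powr_numeral)
      finally show ?thesis by (simp add: power2_eq_square)
    qed simp
    moreover have "- (t powr (M-1) * (\<bar>v t\<bar> powr (p-1) * v t)) * v t + (t powr (M-1) * dv t) * dv t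
       = t powr (M-1) * (dv t)\<^sup>2 - t powr (M-1) * (\<bar>v t\<bar> powr (p-1) * v t * v t)"
      by (simp add: power2_eq_square algebra_simps)
    ultimately show ?thesis
      by (simp add: has_real_derivative_iff_has_vector_derivative[symmetric])
  qed
  have G0: "G b - G a = 0" using za zb M2 unfolding G_def by auto
  have hi: "((\<lambda>t. t powr (M-1) * (dv t)\<^sup>2 - t powr (M-1) * \<bar>v t\<bar> powr (p+1)) has_integral 0) {a..b}"
    using fundamental_theorem_of_calculus_interior_strong[of "{}" a b G, OF _ _ dG cG] ab G0 by auto
  have i1: "(\<lambda>t. t powr (M-1) * (dv t)\<^sup>2) integrable_on {a..b}"
    using continuous_on_mult[OF cw continuous_on_power[OF cdvab]] by (intro integrable_continuous_interval)
  have i2: "(\<lambda>t. t powr (M-1) * \<bar>v t\<bar> powr (p+1)) integrable_on {a..b}"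
    using continuous_on_mult[OF cw cpow[of "p+1"]] p1 by (intro integrable_continuous_interval) auto
  show ?thesis using integral_diff[OF i1 i2] integral_unique[OF hi] by simp
qed

lemma intc: "continuous_on {a..b} (f::real\<Rightarrow>real) \<Longrightarrow> f integrable_on {a..b}"
  by (rule integrable_continuous_interval)

lemma cwv2: "continuous_on {a..b} (\<lambda>t. t powr (M-1) * (v t)\<^sup>2)"
  using continuous_on_mult[OF cw continuous_on_power[OF cv]] by simp
lemma cwdv2: "continuous_on {a..b} (\<lambda>t. t powr (M-1) * (dv t)\<^sup>2)"
  using continuous_on_mult[OF cw continuous_on_power[OF cdvab]] by simp
lemma cwpow: "e > 0 \<Longrightarrow> continuous_on {a..b} (\<lambda>t. t powr (M-1) * \<bar>v t\<bar> powr e)"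
  using continuous_on_mult[OF cw cpow] by simp

lemma poincare:
  "integral {a..b} (\<lambda>t. t powr (M-1) * (v t)\<^sup>2) \<le>
   4 / M\<^sup>2 * integral {a..b} (\<lambda>t. t powr (M-1) * (dv t)\<^sup>2)"
proof -
  define F where "F t = t powr M * (v t)\<^sup>2" for t
  define F' where "F' t = M * t powr (M-1) * (v t)\<^sup>2 + t powr M * (2 * v t * dv t)" for t
  have cpM: "continuous_on {a..b} (\<lambda>t. t powr M)"
    by (rule continuous_on_powr') (use M2 a0 in \<open>auto intro!: continuous_intros\<close>)
  have cF: "continuous_on {a..b} F" unfolding F_def
    using continuous_on_mult[OF cpM continuous_on_power[OF cv]] by simp
  have dF: "(F has_vector_derivative F' t) (at t)" if t: "t \<in> {a<..<b}" for t
  proof -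
    have t01: "t \<in> {0<..<1}" using t a0 b1 by auto
    have "(F has_real_derivative (M * t powr (M-1)) * (v t)\<^sup>2 + t powr M * (2 * v t * dv t)) (at t)"
      unfolding F_def
      using DERIV_mult[OF has_real_derivative_powr[of t M] DERIV_power[OF Dat[OF t01], of 2]] t01
      by (simp add: algebra_simps)
    then show ?thesis unfolding F'_def
      by (simp add: has_real_derivative_iff_has_vector_derivative[symmetric])
  qed
  have F0: "F b - F a = 0" using za zb M2 unfolding F_def by auto
  have hi: "(F' has_integral 0) {a..b}"
    using fundamental_theorem_of_calculus_interior_strong[of "{}" a b F, OF _ _ dF cF] ab F0 by auto
  have pw: "M/2 * (t powr (M-1) * (v t)\<^sup>2) \<le> F' t + 2/M * (t powr (M-1) * (dv t)\<^sup>2)"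
    if t: "t \<in> {a..b}" for t
  proof -
    have t0: "0 \<le> t" "t \<le> 1" using t a0 b1 by auto
    have tM: "t powr M = t * t powr (M-1)"
    proof (cases "t = 0")
      case False
      then have "t powr M = t powr (1 + (M-1))" by simp
      also have "\<dots> = t powr 1 * t powr (M-1)" by (rule powr_add)
      finally show ?thesis using t0 False by simp
    qed (use M2 in simp)
    define w where "w = t powr (M-1)"
    have w0: "w \<ge> 0" unfolding w_def by simp
    have sq: "0 \<le> w * (M/2) * (v t + 2/M * t * dv t)\<^sup>2" using w0 M2 by simp
    have t2: "w * (t * dv t)\<^sup>2 \<le> w * (dv t)\<^sup>2"
    proof -
      have "t\<^sup>2 \<le> 1" using t0 by (simp add: power_le_one)
      then have "t\<^sup>2 * (dv t)\<^sup>2 \<le> 1 * (dv t)\<^sup>2" by (intro mult_right_mono) auto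
      then show ?thesis using w0 by (intro mult_left_mono) (auto simp: power_mult_distrib)
    qed
    have id: "w * (M/2) * (v t + 2/M * t * dv t)\<^sup>2 = M/2 * (w * (v t)\<^sup>2) + 2 * t * w * v t * dv t + 2/M * (w * (t * dv t)\<^sup>2)"
      using M2 by (simp add: power2_eq_square field_simps)
    have t3: "2/M * (w * (t * dv t)\<^sup>2) \<le> 2/M * (w * (dv t)\<^sup>2)"
      using mult_left_mono[OF t2, of "2/M"] M2 by simp
    have "F' t = M * (w * (v t)\<^sup>2) + 2 * t * w * v t * dv t"
      unfolding F'_def tM w_def by (simp add: algebra_simps)
    then show ?thesis unfolding w_def[symmetric] using id t3 sq by linarith
  qed
  have "integral {a..b} (\<lambda>t. M/2 * (t powr (M-1) * (v t)\<^sup>2)) \<le>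
        integral {a..b} (\<lambda>t. F' t + 2/M * (t powr (M-1) * (dv t)\<^sup>2))"
  proof (rule integral_le[OF _ _ pw])
    show "(\<lambda>t. M/2 * (t powr (M-1) * (v t)\<^sup>2)) integrable_on {a..b}"
      using integrable_on_cmult_left[OF intc[OF cwv2], of "M/2"] by simp
    show "(\<lambda>t. F' t + 2/M * (t powr (M-1) * (dv t)\<^sup>2)) integrable_on {a..b}"
      using integrable_add[OF has_integral_integrable[OF hi] integrable_on_cmult_left[OF intc[OF cwdv2], of "2/M"]] by simp
  qed
  also have "\<dots> = integral {a..b} F' + integral {a..b} (\<lambda>t. 2/M * (t powr (M-1) * (dv t)\<^sup>2))"
    by (intro integral_add has_integral_integrable[OF hi])
      (use integrable_on_cmult_left[OF intc[OF cwdv2], of "2/M"] in simp)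
  also have "\<dots> = 2/M * integral {a..b} (\<lambda>t. t powr (M-1) * (dv t)\<^sup>2)"
    using integral_unique[OF hi] by simp
  finally have "M/2 * integral {a..b} (\<lambda>t. t powr (M-1) * (v t)\<^sup>2) \<le> 2/M * integral {a..b} (\<lambda>t. t powr (M-1) * (dv t)\<^sup>2)"
    by simp
  then show ?thesis using M2 by (simp add: field_simps power2_eq_square)
qed

lemma mid: "(a+b)/2 \<in> {a<..<b}" using ab by auto

lemma posint:
  fixes f :: "real \<Rightarrow> real"
  assumes c: "continuous_on {a..b} f" and nn: "\<And>t. t \<in> {a..b} \<Longrightarrow> 0 \<le> f t"
    and pos: "f ((a+b)/2) > 0"
  shows "integral {a..b} f > 0"
proof -
  have "integral {a..b} f \<ge> 0" using nn intc[OF c] by (intro integral_nonneg) auto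
  moreover have "integral {a..b} f \<noteq> 0"
  proof
    assume "integral {a..b} f = 0"
    then have "(f has_integral 0) (cbox a b)" using intc[OF c] by (metis cbox_interval has_integral_integral)
    from has_integral_0_cbox_imp_0[OF _ _ this, of "(a+b)/2"] c nn mid pos ab
    show False by auto
  qed
  ultimately show ?thesis by simp
qed

definition A where "A = integral {a..b} (\<lambda>t. t powr (M-1) * (dv t)\<^sup>2)"

lemma vmid: "v ((a+b)/2) \<noteq> 0" using nz mid by blast

lemma Apos: "A > 0"
proof -
  have "integral {a..b} (\<lambda>t. t powr (M-1) * \<bar>v t\<bar> powr (p+1)) > 0"
    using cwpow[of "p+1"] p1 vmid a0 ab by (intro posint) auto
  then show ?thesis unfolding A_def energy .
qed

lemma Kge1: "(SUP t\<in>{a..b}. \<bar>v t\<bar>) \<ge> 1"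
proof -
  define K where "K = (SUP t\<in>{a..b}. \<bar>v t\<bar>)"
  have "compact ((\<lambda>t. \<bar>v t\<bar>) ` {a..b})"
    using cv by (intro compact_continuous_image continuous_intros) auto
  then have bdd: "bdd_above ((\<lambda>t. \<bar>v t\<bar>) ` {a..b})" by (intro bounded_imp_bdd_above compact_imp_bounded)
  have Kv: "\<bar>v t\<bar> \<le> K" if "t \<in> {a..b}" for t unfolding K_def using bdd that by (intro cSUP_upper)
  have K0: "K \<ge> 0" using Kv[of a] ab by force
  have "A = integral {a..b} (\<lambda>t. t powr (M-1) * \<bar>v t\<bar> powr (p+1))" unfolding A_def energy ..
  also have "\<dots> \<le> integral {a..b} (\<lambda>t. K powr (p-1) * (t powr (M-1) * (v t)\<^sup>2))"
  proof (intro integral_le intc cwpow)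
    fix t assume t: "t \<in> {a..b}"
    have "\<bar>v t\<bar> powr (p+1) = \<bar>v t\<bar> powr (p-1) * (v t)\<^sup>2"
    proof (cases "v t = 0")
      case False
      have "\<bar>v t\<bar> powr (p+1) = \<bar>v t\<bar> powr ((p-1) + 2)" by (simp add: add.commute)
      also have "\<dots> = \<bar>v t\<bar> powr (p-1) * \<bar>v t\<bar> powr 2" by (rule powr_add)
      also have "\<bar>v t\<bar> powr 2 = (v t)\<^sup>2" by (simp add: powr_numeral)
      finally show ?thesis .
    qed (use p1 in simp)
    moreover have "\<bar>v t\<bar> powr (p-1) \<le> K powr (p-1)" using Kv[OF t] p1 by (intro powr_mono2) auto
    moreover have "0 \<le> t powr (M-1) * (v t)\<^sup>2" by simp
    ultimately show "t powr (M-1) * \<bar>v t\<bar> powr (p+1) \<le> K powr (p-1) * (t powr (M-1) * (v t)\<^sup>2)"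
      using mult_right_mono[of "\<bar>v t\<bar> powr (p-1)" "K powr (p-1)" "t powr (M-1) * (v t)\<^sup>2"]
      by (simp add: algebra_simps)
  qed (use p1 continuous_on_mult[OF continuous_on_const cwv2] in auto)
  also have "\<dots> = K powr (p-1) * integral {a..b} (\<lambda>t. t powr (M-1) * (v t)\<^sup>2)" by simp
  also have "\<dots> \<le> K powr (p-1) * (4 / M\<^sup>2 * A)" unfolding A_def
    by (intro mult_left_mono poincare) auto
  finally have "A \<le> K powr (p-1) * (4 / M\<^sup>2) * A" by simp
  then have "1 \<le> K powr (p-1) * (4 / M\<^sup>2)"
    using Apos mult_le_cancel_right1[of A "K powr (p-1) * (4 / M\<^sup>2)"] by blast
  then have "M\<^sup>2 / 4 \<le> K powr (p-1)" using M2 by (simp add: field_simps)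
  moreover have "1 < M\<^sup>2/4"
  proof -
    have "2 * 2 < M * M" using mult_strict_mono[of 2 M 2 M] M2 by simp
    then show ?thesis by (simp add: power2_eq_square)
  qed
  ultimately have Kp: "1 < K powr (p-1)" by simp
  show ?thesis unfolding K_def[symmetric]
  proof (rule ccontr)
    assume "\<not> 1 \<le> K"
    then have "K powr (p-1) \<le> 1 powr (p-1)" using K0 p1 by (intro powr_mono2) auto
    then show False using Kp by simp
  qed
qed

lemma restr:
  fixes c :: "real \<Rightarrow> real"
  assumes c: "continuous_on {a..b} c"
  shows "set_integrable lborel {0<..<1} (\<lambda>t. if t \<in> {a..b} then c t else 0)"
    "(LINT t:{0<..<1}|lborel. (if t \<in> {a..b} then c t else 0)) = integral {a..b} c"
proof -
  have si: "set_integrable lborel {a..b} c" by (rule borel_integrable_atLeastAtMost'[OF c])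
  have "set_integrable lborel ({0<..<1} \<inter> {a..b}) c"
    by (rule set_integrable_subset[OF si]) auto
  moreover have "(\<lambda>t. indicator ({0<..<1} \<inter> {a..b}) t *\<^sub>R c t) =
      (\<lambda>t. indicator {0<..<1} t *\<^sub>R (if t \<in> {a..b} then c t else 0))"
    by (auto simp: indicator_def)
  ultimately show si2: "set_integrable lborel {0<..<1} (\<lambda>t. if t \<in> {a..b} then c t else 0)"
    unfolding set_integrable_def by simp
  have "(LINT t:{0<..<1}|lborel. (if t \<in> {a..b} then c t else 0)) =
        integral {0<..<1} (\<lambda>t. if t \<in> {a..b} then c t else 0)"
    by (rule set_borel_integral_eq_integral(2)[OF si2])
  also have "\<dots> = integral {0..1} (\<lambda>t. if t \<in> {a..b} then c t else 0)"
    by (simp add: integral_open_interval_real)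
  also have "\<dots> = integral ({a..b} \<inter> {0..1}) c" by (rule integral_restrict_Int)
  also have "{a..b} \<inter> {0..1} = {a..b}" using sub01 by auto
  finally show "(LINT t:{0<..<1}|lborel. (if t \<in> {a..b} then c t else 0)) = integral {a..b} c" .
qed

definition u where "u t = (if t \<in> {a..b} then v t else 0)" for t
definition g where "g t = (if t \<in> {a..b} then dv t else 0)" for t
definition s where "s = 2*M/(M-2)"
definition B where "B = integral {a..b} (\<lambda>t. t powr (M-1) * \<bar>v t\<bar> powr s)"

lemma s_pos: "s > 2" unfolding s_def using M2 by (simp add: field_simps)

lemma fu2: "(\<lambda>t. t powr (M-1) * (u t)\<^sup>2) = (\<lambda>t. if t \<in> {a..b} then t powr (M-1) * (v t)\<^sup>2 else 0)"
  by (auto simp: u_def)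
lemma fg2: "(\<lambda>t. t powr (M-1) * (g t)\<^sup>2) = (\<lambda>t. if t \<in> {a..b} then t powr (M-1) * (dv t)\<^sup>2 else 0)"
  by (auto simp: g_def)
lemma fus: "(\<lambda>t. t powr (M-1) * \<bar>u t\<bar> powr s) = (\<lambda>t. if t \<in> {a..b} then t powr (M-1) * \<bar>v t\<bar> powr s else 0)"
  by (auto simp: u_def)

lemma FTCv: "c \<in> {a..b} \<Longrightarrow> integral {c..b} dv = v b - v c"
proof -
  assume c: "c \<in> {a..b}"
  have "(dv has_integral (v b - v c)) {c..b}"
  proof (rule fundamental_theorem_of_calculus)
    show "c \<le> b" using c by auto
    fix x assume x: "x \<in> {c..b}"
    then have "x \<in> {0..1}" using c sub01 by auto
    then have "(v has_real_derivative dv x) (at x within {0..1})" using D by auto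
    then have "(v has_real_derivative dv x) (at x within {c..b})"
      by (rule has_field_derivative_subset) (use c sub01 in auto)
    then show "(v has_vector_derivative dv x) (at x within {c..b})"
      by (simp add: has_real_derivative_iff_has_vector_derivative)
  qed
  then show ?thesis by (rule integral_unique)
qed

lemma H10: "H10M M u g"
  unfolding H10M_def
proof (intro conjI ballI)
  fix a' assume a': "a' \<in> {0<..<1::real}"
  have "dv integrable_on ({a..b} \<inter> {a'..1})"
    using cdv sub01 by (auto intro!: integrable_continuous_interval intro: continuous_on_subset)
  then show "g integrable_on {a'..1}" unfolding g_def integrable_restrict_Int[symmetric] .
next
  fix x assume x: "x \<in> {0<..1::real}"
  have "integral {x..1} g = integral ({a..b} \<inter> {x..1}) dv"
    unfolding g_def by (rule integral_restrict_Int)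
  show "u x = - integral {x..1} g"
  proof (cases "x \<le> b")
    case False
    then have "{a..b} \<inter> {x..1} = {}" by auto
    then show ?thesis using False \<open>integral {x..1} g = _\<close> by (simp add: u_def)
  next
    case True
    then have "{a..b} \<inter> {x..1} = {max a x..b}" using b1 by auto
    then have "integral {x..1} g = - v (max a x)"
      using FTCv[of "max a x"] True ab zb \<open>integral {x..1} g = _\<close> by auto
    moreover have "u x = v (max a x)"
    proof (cases "a \<le> x")
      case False
      then have "a \<noteq> 0" using x by auto
      then show ?thesis using za False by (simp add: u_def)
    qed (use True in \<open>simp add: u_def\<close>)
    ultimately show ?thesis by simp
  qed
next
  show "set_integrable lborel {0<..<1::real} (\<lambda>t. t powr (M-1) * (u t)\<^sup>2)"
    unfolding fu2 by (rule restr(1)[OF cwv2])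
  show "set_integrable lborel {0<..<1::real} (\<lambda>t. t powr (M-1) * (g t)\<^sup>2)"
    unfolding fg2 by (rule restr(1)[OF cwdv2])
qed

lemma inset: "(u, g) \<in> {(v, g). H10M M v g \<and> (\<exists>t\<in>{0<..1}. v t \<noteq> 0) \<and>
        set_integrable lborel {0<..<1::real} (\<lambda>t. t powr (M-1) * \<bar>v t\<bar> powr (2*M/(M-2)))}"
proof -
  have "(a+b)/2 \<in> {0<..1}" using mid a0 b1 by auto
  moreover have "u ((a+b)/2) \<noteq> 0" using vmid mid by (simp add: u_def)
  moreover have "set_integrable lborel {0<..<1::real} (\<lambda>t. t powr (M-1) * \<bar>u t\<bar> powr s)"
    unfolding fus using s_pos by (intro restr(1) cwpow) auto
  ultimately show ?thesis using H10 unfolding s_def by auto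
qed

lemma ratio: "(LINT t:{0<..<1}|lborel. t powr (M-1) * (g t)\<^sup>2) /
      (LINT t:{0<..<1}|lborel. t powr (M-1) * \<bar>u t\<bar> powr (2*M/(M-2))) powr ((M-2)/M)
     = A / B powr ((M-2)/M)"
  unfolding s_def[symmetric] fg2 fus A_def B_def
  using restr(2)[OF cwdv2] restr(2)[OF cwpow[of s]] s_pos by (simp only: order_less_trans[OF zero_less_two])

lemma S_le: "S_M M \<le> A / B powr ((M-2)/M)"
proof -
  let ?X = "{(v, g). H10M M v g \<and> (\<exists>t\<in>{0<..1}. v t \<noteq> 0) \<and>
        set_integrable lborel {0<..<1::real} (\<lambda>t. t powr (M-1) * \<bar>v t\<bar> powr (2*M/(M-2)))}"
  let ?f = "\<lambda>vg. (LINT t:{0<..<1}|lborel. t powr (M-1) * (snd vg t)\<^sup>2) /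
      (LINT t:{0<..<1}|lborel. t powr (M-1) * \<bar>fst vg t\<bar> powr (2*M/(M-2))) powr ((M-2)/M)"
  have nn: "0 \<le> ?f vg" for vg
    by (intro divide_nonneg_nonneg) (auto simp: set_lebesgue_integral_def indicator_def)
  have "S_M M = (INF vg\<in>?X. ?f vg)" unfolding S_M_def by simp
  also have "\<dots> \<le> ?f (u, g)" by (rule cINF_lower[OF _ inset]) (rule bdd_belowI[where m=0], use nn in blast)
  also have "\<dots> = A / B powr ((M-2)/M)" using ratio by simp
  finally show ?thesis .
qed

lemma S_ge0: "S_M M \<ge> 0"
proof -
  let ?X = "{(v, g). H10M M v g \<and> (\<exists>t\<in>{0<..1}. v t \<noteq> 0) \<and>
        set_integrable lborel {0<..<1::real} (\<lambda>t. t powr (M-1) * \<bar>v t\<bar> powr (2*M/(M-2)))}"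
  let ?f = "\<lambda>vg. (LINT t:{0<..<1}|lborel. t powr (M-1) * (snd vg t)\<^sup>2) /
      (LINT t:{0<..<1}|lborel. t powr (M-1) * \<bar>fst vg t\<bar> powr (2*M/(M-2))) powr ((M-2)/M)"
  have nn: "0 \<le> ?f vg" for vg
    by (intro divide_nonneg_nonneg) (auto simp: set_lebesgue_integral_def indicator_def)
  have "0 \<le> (INF vg\<in>?X. ?f vg)" using inset by (intro cINF_greatest nn) auto
  then show ?thesis unfolding S_M_def by simp
qed

lemma Bpos: "B > 0"
  unfolding B_def using cwpow[of s] s_pos vmid a0 ab by (intro posint) auto

lemma w_le1: "t \<in> {a..b} \<Longrightarrow> t powr (M-1) \<le> 1"
  using powr_mono2[of "M-1" t 1] M2 a0 b1 by auto

lemma holder: "A \<le> B powr ((p+1)/s)"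
proof -
  define q where "q = p+1"
  define r where "r = s/q"
  define r' where "r' = r/(r-1)"
  define \<beta> where "\<beta> = B powr (1/r)"
  have q0: "q > 2" unfolding q_def using p1 by simp
  have qs: "q < s" unfolding q_def s_def using pM M2 by (simp add: field_simps)
  have r1: "r > 1" unfolding r_def using qs q0 by simp
  have r'1: "r' > 1" unfolding r'_def using r1 by (simp add: field_simps)
  have rr: "1/r + 1/r' = 1" unfolding r'_def using r1 by (simp add: field_simps)
  have bpos: "\<beta> > 0" unfolding \<beta>_def using Bpos by simp
  have br: "\<beta> powr r = B" unfolding \<beta>_def using Bpos r1 by (simp add: powr_powr)
  have br2: "\<beta> powr (s/q) = B" using br unfolding r_def .
  have pw: "(1/\<beta>) * (t powr (M-1) * \<bar>v t\<bar> powr q) \<le> (1/(r*B)) * (t powr (M-1) * \<bar>v t\<bar> powr s) + 1/r'"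
    if t: "t \<in> {a..b}" for t
  proof -
    define y where "y = \<bar>v t\<bar> powr q / \<beta>"
    have y0: "y \<ge> 0" unfolding y_def using bpos by simp
    have "y * 1 \<le> y powr r / r + 1 powr r' / r'"
      by (rule Youngs_inequality[OF r1 r'1 rr y0]) simp
    moreover have "y powr r = \<bar>v t\<bar> powr s / B"
      unfolding y_def powr_divide powr_powr r_def br2 using q0 by simp
    ultimately have yy: "y \<le> \<bar>v t\<bar> powr s / B / r + 1/r'" by simp
    have w0: "0 \<le> t powr (M-1)" by simp
    have "(1/\<beta>) * (t powr (M-1) * \<bar>v t\<bar> powr q) = t powr (M-1) * y" unfolding y_def by simp
    also have "\<dots> \<le> t powr (M-1) * (\<bar>v t\<bar> powr s / B / r + 1/r')"
      by (rule mult_left_mono[OF yy w0])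
    also have "\<dots> = (1/(r*B)) * (t powr (M-1) * \<bar>v t\<bar> powr s) + t powr (M-1) * (1/r')"
      by (simp add: algebra_simps)
    also have "t powr (M-1) * (1/r') \<le> 1 * (1/r')"
      using w_le1[OF t] r'1 by (intro mult_right_mono) auto
    finally show ?thesis by simp
  qed
  have "integral {a..b} (\<lambda>t. (1/\<beta>) * (t powr (M-1) * \<bar>v t\<bar> powr q)) \<le>
        integral {a..b} (\<lambda>t. (1/(r*B)) * (t powr (M-1) * \<bar>v t\<bar> powr s) + 1/r')"
  proof (rule integral_le[OF _ _ pw])
    show "(\<lambda>t. (1/\<beta>) * (t powr (M-1) * \<bar>v t\<bar> powr q)) integrable_on {a..b}"
      using integrable_on_cmult_left[OF intc[OF cwpow[of q]], of "1/\<beta>"] q0 by simp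
    show "(\<lambda>t. (1/(r*B)) * (t powr (M-1) * \<bar>v t\<bar> powr s) + 1/r') integrable_on {a..b}"
      using integrable_add[OF integrable_on_cmult_left[OF intc[OF cwpow[of s]], of "1/(r*B)"] integrable_const_ivl[of "1/r'" a b]] s_pos by simp
  qed
  also have "\<dots> = (1/(r*B)) * B + (b-a) * (1/r')"
  proof -
    have "integral {a..b} (\<lambda>t. (1/(r*B)) * (t powr (M-1) * \<bar>v t\<bar> powr s) + 1/r') =
        integral {a..b} (\<lambda>t. (1/(r*B)) * (t powr (M-1) * \<bar>v t\<bar> powr s)) + integral {a..b} (\<lambda>t. 1/r')"
      by (intro integral_add) (use integrable_on_cmult_left[OF intc[OF cwpow[of s]], of "1/(r*B)"] s_pos in auto)
    then show ?thesis unfolding B_def using ab by simp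
  qed
  also have "\<dots> \<le> 1/r + 1/r'"
  proof -
    have "(1/(r*B)) * B = 1/r" using Bpos by simp
    moreover have "(b-a) * (1/r') \<le> 1 * (1/r')" using a0 b1 r'1 by (intro mult_right_mono) auto
    ultimately show ?thesis by simp
  qed
  finally have "(1/\<beta>) * integral {a..b} (\<lambda>t. t powr (M-1) * \<bar>v t\<bar> powr q) \<le> 1"
    unfolding rr by simp
  then have "(1/\<beta>) * A \<le> 1" unfolding q_def A_def energy .
  then have "A \<le> \<beta>" using bpos by (simp add: field_simps)
  then show ?thesis unfolding \<beta>_def r_def q_def by simp
qed

lemma Sbound: "S_M M powr ((p+1)/(p-1)) \<le> A"
proof -
  define q where "q = p+1"
  have q0: "q > 2" unfolding q_def using p1 by simp
  have e: "(M-2)/M = 2/s" unfolding s_def using M2 by (simp add: field_simps)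
  have h: "A \<le> B powr (q/s)" using holder unfolding q_def .
  have "A powr (2/q) \<le> (B powr (q/s)) powr (2/q)"
    using h Apos q0 by (intro powr_mono2) auto
  also have "\<dots> = B powr (2/s)" using q0 by (simp add: powr_powr)
  finally have hb: "A powr (2/q) \<le> B powr (2/s)" .
  have Aq: "A powr (2/q) > 0" using Apos by simp
  have "S_M M \<le> A / B powr (2/s)" using S_le unfolding e .
  also have "\<dots> \<le> A / A powr (2/q)"
    using hb Aq Apos Bpos by (intro divide_left_mono) auto
  also have "\<dots> = A powr ((q-2)/q)"
  proof -
    have "A powr ((q-2)/q) = A powr (1 - 2/q)" using q0 by (simp add: field_simps)
    also have "\<dots> = A powr 1 / A powr (2/q)" by (rule powr_diff)
    finally show ?thesis using Apos by simp
  qed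
  finally have Sle: "S_M M \<le> A powr ((q-2)/q)" .
  have "S_M M powr (q/(q-2)) \<le> (A powr ((q-2)/q)) powr (q/(q-2))"
    using Sle S_ge0 q0 by (intro powr_mono2) auto
  also have "\<dots> = A" using q0 Apos by (simp add: powr_powr)
  finally show ?thesis unfolding q_def by simp
qed

lemma zone_main:
  "integral {a..b} (\<lambda>t. t powr (M-1) * \<bar>v t\<bar> powr (p+1)) = integral {a..b} (\<lambda>t. t powr (M-1) * (dv t)\<^sup>2)
   \<and> S_M M powr ((p+1)/(p-1)) \<le> integral {a..b} (\<lambda>t. t powr (M-1) * (dv t)\<^sup>2)
   \<and> 1 \<le> (SUP t\<in>{a..b}. \<bar>v t\<bar>) \<and> 0 \<le> S_M M"
  using energy Sbound Kge1 S_ge0 unfolding A_def by auto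

end

lemma nodes_props:
  fixes M p :: real and v dv :: "real \<Rightarrow> real"
  assumes rs: "radial_sol M p m v dv" and m1: "m \<ge> 1" and im: "i < m"
  shows "0 \<le> nodes v i \<and> nodes v i < nodes v (Suc i) \<and> nodes v (Suc i) \<le> 1 \<and>
         (nodes v i = 0 \<or> v (nodes v i) = 0) \<and> v (nodes v (Suc i)) = 0 \<and>
         (\<forall>t\<in>{nodes v i<..<nodes v (Suc i)}. v t \<noteq> 0)"
proof -
  define Zi where "Zi = {t\<in>{0<..<1::real}. v t = 0}"
  define Z where "Z = {0} \<union> {t\<in>{0<..1::real}. v t = 0}"
  define xs where "xs = sorted_list_of_set Z"
  have fZi: "finite Zi" and cZi: "card Zi = m - 1" using rs unfolding radial_sol_def Zi_def by auto
  have v1: "v 1 = 0" using rs unfolding radial_sol_def by auto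
  have ZZ: "Z = insert 0 (insert 1 Zi)" unfolding Z_def Zi_def using v1 by auto
  have fZ: "finite Z" unfolding ZZ using fZi by simp
  have cZ: "card Z = m + 1" unfolding ZZ using fZi cZi m1 by (simp add: Zi_def)
  have len: "length xs = m + 1" unfolding xs_def using cZ by simp
  have setxs: "set xs = Z" unfolding xs_def using fZ by simp
  have ss: "sorted_wrt (<) xs" unfolding xs_def using strict_sorted_list_of_set[of Z] by simp
  have nd: "nodes v k = xs ! k" for k unfolding nodes_def xs_def Z_def ..
  have inZ: "xs ! k \<in> Z" if "k < m + 1" for k using that len setxs nth_mem by metis
  have Z01: "Z \<subseteq> {0..1}" unfolding Z_def by auto
  have lt: "xs ! i < xs ! Suc i" using sorted_wrt_nth_less[OF ss, of i "Suc i"] len im by simp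
  have a0: "0 \<le> xs ! i" using inZ[of i] Z01 im by auto
  have b1: "xs ! Suc i \<le> 1" using inZ[of "Suc i"] Z01 im by auto
  have za: "xs ! i = 0 \<or> v (xs ! i) = 0" using inZ[of i] im unfolding Z_def by auto
  have zb: "v (xs ! Suc i) = 0" using inZ[of "Suc i"] im lt a0 unfolding Z_def by auto
  have nz: "v t \<noteq> 0" if t: "t \<in> {xs ! i<..<xs ! Suc i}" for t
  proof
    assume vt: "v t = 0"
    have "t \<in> Z" unfolding Z_def using t vt a0 b1 by auto
    then obtain j where j: "j < length xs" "xs ! j = t" using setxs by (metis in_set_conv_nth)
    show False
    proof (cases "j \<le> i")
      case True
      then have "xs ! j \<le> xs ! i"
        using sorted_wrt_nth_less[OF ss, of j i] len im by (cases "j = i") auto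
      then show False using j t by auto
    next
      case False
      then have "xs ! Suc i \<le> xs ! j"
        using sorted_wrt_nth_less[OF ss, of "Suc i" j] j by (cases "j = Suc i") auto
      then show False using j t by auto
    qed
  qed
  show ?thesis unfolding nd using a0 lt b1 za zb nz by auto
qed

theorem lemma2p5:
  fixes M :: real and m :: nat and v dv :: "real \<Rightarrow> real \<Rightarrow> real"
  assumes "M > 2" and "m \<ge> 1"
    and sol: "\<And>p. p \<in> {1<..<(M+2)/(M-2)} \<Longrightarrow> radial_sol M p m (v p) (dv p)"
    and uniq: "\<And>p w dw. p \<in> {1<..<(M+2)/(M-2)} \<Longrightarrow> radial_sol M p m w dw \<Longrightarrow>
                 \<forall>t\<in>{0..1}. w t = v p t"
    and "i < m"
  shows "Liminf (at_left ((M+2)/(M-2)))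
           (\<lambda>p. ereal (integral {nodes (v p) i..nodes (v p) (Suc i)}
                  (\<lambda>t. t powr (M-1) * \<bar>v p t\<bar> powr (p+1))))
         = Liminf (at_left ((M+2)/(M-2)))
           (\<lambda>p. ereal (integral {nodes (v p) i..nodes (v p) (Suc i)}
                  (\<lambda>t. t powr (M-1) * (dv p t)\<^sup>2)))
       \<and> Liminf (at_left ((M+2)/(M-2)))
           (\<lambda>p. ereal (integral {nodes (v p) i..nodes (v p) (Suc i)}
                  (\<lambda>t. t powr (M-1) * (dv p t)\<^sup>2)))
         \<ge> ereal (S_M M powr (M/2))
       \<and> Liminf (at_left ((M+2)/(M-2)))
           (\<lambda>p. ereal (SUP t\<in>{nodes (v p) i..nodes (v p) (Suc i)}. \<bar>v p t\<bar>)) > 0"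
proof -
  define P where "P = (M+2)/(M-2)"
  have M2: "M > 2" by fact
  have P1: "P > 1" unfolding P_def using M2 by (simp add: field_simps)
  let ?I = "\<lambda>p. integral {nodes (v p) i..nodes (v p) (Suc i)} (\<lambda>t. t powr (M-1) * \<bar>v p t\<bar> powr (p+1))"
  let ?J = "\<lambda>p. integral {nodes (v p) i..nodes (v p) (Suc i)} (\<lambda>t. t powr (M-1) * (dv p t)\<^sup>2)"
  let ?K = "\<lambda>p. (SUP t\<in>{nodes (v p) i..nodes (v p) (Suc i)}. \<bar>v p t\<bar>)"
  have Z: "?I p = ?J p \<and> S_M M powr ((p+1)/(p-1)) \<le> ?J p \<and> 1 \<le> ?K p \<and> 0 \<le> S_M M"
    if p: "p \<in> {1<..<P}" for p
  proof -
    have rs: "radial_sol M p m (v p) (dv p)" using sol p unfolding P_def by auto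
    note N = nodes_props[OF rs \<open>m \<ge> 1\<close> \<open>i < m\<close>]
    show ?thesis
      by (rule zone_main[OF M2 _ _ _ _ _ _ _ _ _ _ _])
         (use p N rs in \<open>auto simp: P_def radial_sol_def\<close>)
  qed
  have ev: "eventually (\<lambda>p. p \<in> {1<..<P}) (at_left P)" using eventually_at_left_real[OF P1] .
  have S0: "0 \<le> S_M M" using Z[of "(1+P)/2"] P1 by auto
  have c1: "Liminf (at_left P) (\<lambda>p. ereal (?I p)) = Liminf (at_left P) (\<lambda>p. ereal (?J p))"
    by (rule Liminf_eq) (use ev Z in \<open>auto elim!: eventually_mono\<close>)
  have lim: "((\<lambda>p. ereal (S_M M powr ((p+1)/(p-1)))) \<longlongrightarrow> ereal (S_M M powr (M/2))) (at_left P)"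
  proof (cases "S_M M = 0")
    case True
    then show ?thesis by simp
  next
    case False
    have "((\<lambda>p. (p+1)/(p-1)) \<longlongrightarrow> (P+1)/(P-1)) (at_left P)"
      using P1 by (intro tendsto_intros) auto
    moreover have "(P+1)/(P-1) = M/2" unfolding P_def using M2 by (simp add: field_simps)
    ultimately have "((\<lambda>p. S_M M powr ((p+1)/(p-1))) \<longlongrightarrow> S_M M powr (M/2)) (at_left P)"
      using False by (intro tendsto_powr tendsto_const) auto
    then show ?thesis by (rule tendsto_ereal)
  qed
  have "ereal (S_M M powr (M/2)) = Liminf (at_left P) (\<lambda>p. ereal (S_M M powr ((p+1)/(p-1))))"
    by (rule lim_imp_Liminf[OF _ lim, symmetric]) simp
  also have "\<dots> \<le> Liminf (at_left P) (\<lambda>p. ereal (?J p))"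
    by (rule Liminf_mono) (use ev Z in \<open>auto elim!: eventually_mono\<close>)
  finally have c2: "ereal (S_M M powr (M/2)) \<le> Liminf (at_left P) (\<lambda>p. ereal (?J p))" .
  have "1 \<le> Liminf (at_left P) (\<lambda>p. ereal (?K p))"
    by (rule Liminf_bounded) (use ev Z in \<open>auto elim!: eventually_mono\<close>)
  then have c3: "0 < Liminf (at_left P) (\<lambda>p. ereal (?K p))"
    by (rule order.strict_trans2[rotated]) simp
  show ?thesis using c1 c2 c3 unfolding P_def by simp
qed
end
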